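(* Assume $\mathcal E$ is stable under pullback and $\mathcal F\subseteq\mathcal E$. Let $c$ be a closure operator on $\mathcal A$ and let $X\in\mathcal X$. If $R$ preserves products with $X$ (i.e. $\rho_{X\times Y}=\rho_X\times\rho_Y$ for every $Y\in\mathcal X$, via the canonical comparison), $\rho_X\in\mathcal E$, and $RX$ is $c$-compact, then $X$ is $c^\rho$-compact.
   Context: Standing setting. $\mathcal X$ and $\mathcal A$ are finitely complete categories; $\mathcal X$ carries a proper factorization system $(\mathcal E,\mathcal M)$ and $\mathcal A$ a proper factorization system $(\mathcal F,\mathcal N)$ (proper: every member of $\mathcal E$, resp. $\mathcal F$, is an epimorphism and every member of $\mathcal M$, resp. $\mathcal N$, is a monomorphism). $\mathcal A$ is a full reflective subcategory of $\mathcal X$ with reflector $R:\mathcal X\to\mathcal A$ and reflection (unit) $\rho_X:X\to RX$; as in the paper's setting, $\mathcal N\subseteq\mathcal M$ and $R\mathcal E\subseteq\mathcal F$. For $X\in\mathcal X$, $\operatorname{sub}X$ is the class $\mathcal M/X$ of $\mathcal M$-morphisms with codomain $X$, preordered by $m\le n$ iff $m=nj$ for some morphism $j$; for $A\in\mathcal A$, $\operatorname{sub}_{\mathcal A}A=\mathcal N/A$ with the same preorder. For $f:X\to Y$ and $m\in\operatorname{sub}X$, the image $f(m)\in\operatorname{sub}Y$ is the $\mathcal M$-part of the $(\mathcal E,\mathcal M)$-factorization of $fm$, and for $n\in\operatorname{sub}Y$ the preimage $f^{-1}(n)\in\operatorname{sub}X$ is the pullback of $n$ along $f$ (analogously in $\mathcal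 A$ using $(\mathcal F,\mathcal N)$). A closure operator $c$ on $\mathcal A$ (with respect to $\mathcal N$) is a family of maps $c_A:\operatorname{sub}_{\mathcal A}A\to\operatorname{sub}_{\mathcal A}A$ ($A\in\mathcal A$) such that $m\le c_A(m)$, $m\le n\Rightarrow c_A(m)\le c_A(n)$, and $f(c_A(m))\le c_B(f(m))$ for every morphism $f:A\to B$ of $\mathcal A$; closure operators on $\mathcal X$ (with respect to $\mathcal M$) are defined likewise. For an arbitrary morphism $g:M\to A$ of $\mathcal A$, write $g(1_M)$ for the $\mathcal N$-part of its $(\mathcal F,\mathcal N)$-factorization and put $c_A(g):=c_A(g(1_M))$. The $R$-initial lift of $c$ is the closure operator $c^\rho$ on $\mathcal X$ given by $c^\rho_X(m)=\rho_X^{-1}(c_{RX}(Rm))$ for $X\in\mathcal X$, $m\in\operatorname{sub}X$. For a closure operator $d$ on a category, an object $X$ is $d$-compact if for every object $Y$ the projection $\pi_Y:X\times Y\to Y$ is $d$-preserving, i.e. $\pi_Y(d_{X\times Y}(m))=d_Y(\pi_Y(m))$ for every subobject $m$ of $X\times Y$ (for $c$-compactness of an object of $\mathcal A$, $Y$ ranges over $\mathcal A$ and subobjects over $\operatorname{sub}_{\mathcal A}$; for $c^\rho$-compactness, over $\mathcal X$ and $\operatorname{sub}$). *)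

theory Defs
  imports Main
begin

record ('o, 'a) cat =
  Obj  :: "'o set"
  Arr  :: "'a set"
  Dom  :: "'a \<Rightarrow> 'o"
  Cod  :: "'a \<Rightarrow> 'o"
  Idt  :: "'o \<Rightarrow> 'a"
  Comp :: "'a \<Rightarrow> 'a \<Rightarrow> 'a"   (* Comp C g f = g o f *)

definition hom :: "('o,'a) cat \<Rightarrow> 'o \<Rightarrow> 'o \<Rightarrow> 'a set" where
  "hom C x y = {f \<in> Arr C. Dom C f = x \<and> Cod C f = y}"

definition is_cat :: "('o,'a) cat \<Rightarrow> bool" where
  "is_cat C \<longleftrightarrow>
     (\<forall>f\<in>Arr C. Dom C f \<in> Obj C \<and> Cod C f \<in> Obj C) \<and>
     (\<forall>x\<in>Obj C. Idt C x \<in> hom C x x) \<and>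
     (\<forall>f\<in>Arr C. \<forall>g\<in>Arr C. Cod C f = Dom C g \<longrightarrow> Comp C g f \<in> hom C (Dom C f) (Cod C g)) \<and>
     (\<forall>f\<in>Arr C. Comp C f (Idt C (Dom C f)) = f \<and> Comp C (Idt C (Cod C f)) f = f) \<and>
     (\<forall>f\<in>Arr C. \<forall>g\<in>Arr C. \<forall>h\<in>Arr C. Cod C f = Dom C g \<and> Cod C g = Dom C h \<longrightarrow>
         Comp C h (Comp C g f) = Comp C (Comp C h g) f)"

definition mono :: "('o,'a) cat \<Rightarrow> 'a \<Rightarrow> bool" where
  "mono C f \<longleftrightarrow> f \<in> Arr C \<and>
     (\<forall>g\<in>Arr C. \<forall>h\<in>Arr C. Cod C g = Dom C f \<and> Cod C h = Dom C f \<and> Dom C g = Dom C h \<and>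
        Comp C f g = Comp C f h \<longrightarrow> g = h)"

definition epi :: "('o,'a) cat \<Rightarrow> 'a \<Rightarrow> bool" where
  "epi C f \<longleftrightarrow> f \<in> Arr C \<and>
     (\<forall>g\<in>Arr C. \<forall>h\<in>Arr C. Dom C g = Cod C f \<and> Dom C h = Cod C f \<and> Cod C g = Cod C h \<and>
        Comp C g f = Comp C h f \<longrightarrow> g = h)"

definition iso :: "('o,'a) cat \<Rightarrow> 'a \<Rightarrow> bool" where
  "iso C f \<longleftrightarrow> f \<in> Arr C \<and> (\<exists>g \<in> hom C (Cod C f) (Dom C f).
     Comp C g f = Idt C (Dom C f) \<and> Comp C f g = Idt C (Cod C f))"

definition is_terminal :: "('o,'a) cat \<Rightarrow> 'o \<Rightarrow> bool" where
  "is_terminal C T \<longleftrightarrow> T \<in> Obj C \<and> (\<forall>Z\<in>Obj C. \<exists>!u. u \<in> hom C Z T)"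

text \<open>\<open>is_pullback C f g p q\<close>: the square \<open>f o p = g o q\<close> is a pullback of the
  cospan \<open>f, g\<close>; so \<open>p\<close> is the pullback of \<open>g\<close> along \<open>f\<close>.\<close>
definition is_pullback :: "('o,'a) cat \<Rightarrow> 'a \<Rightarrow> 'a \<Rightarrow> 'a \<Rightarrow> 'a \<Rightarrow> bool" where
  "is_pullback C f g p q \<longleftrightarrow>
     f \<in> Arr C \<and> g \<in> Arr C \<and> p \<in> Arr C \<and> q \<in> Arr C \<and>
     Cod C f = Cod C g \<and> Cod C p = Dom C f \<and> Cod C q = Dom C g \<and> Dom C p = Dom C q \<and>
     Comp C f p = Comp C g q \<and>
     (\<forall>p'\<in>Arr C. \<forall>q'\<in>Arr C. Cod C p' = Dom C f \<and> Cod C q' = Dom C g \<and> Dom C p' = Dom C q' \<and>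
        Comp C f p' = Comp C g q' \<longrightarrow>
        (\<exists>!u. u \<in> hom C (Dom C p') (Dom C p) \<and> Comp C p u = p' \<and> Comp C q u = q'))"

definition finitely_complete :: "('o,'a) cat \<Rightarrow> bool" where
  "finitely_complete C \<longleftrightarrow> (\<exists>T. is_terminal C T) \<and>
     (\<forall>f\<in>Arr C. \<forall>g\<in>Arr C. Cod C f = Cod C g \<longrightarrow> (\<exists>p q. is_pullback C f g p q))"

definition is_product :: "('o,'a) cat \<Rightarrow> 'o \<Rightarrow> 'a \<Rightarrow> 'a \<Rightarrow> 'o \<Rightarrow> 'o \<Rightarrow> bool" where
  "is_product C P p1 p2 X Y \<longleftrightarrow>
     X \<in> Obj C \<and> Y \<in> Obj C \<and> P \<in> Obj C \<and> p1 \<in> hom C P X \<and> p2 \<in> hom C P Y \<and>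
     (\<forall>Z\<in>Obj C. \<forall>f\<in>hom C Z X. \<forall>g\<in>hom C Z Y.
        \<exists>!u. u \<in> hom C Z P \<and> Comp C p1 u = f \<and> Comp C p2 u = g)"

definition factsys :: "('o,'a) cat \<Rightarrow> 'a set \<Rightarrow> 'a set \<Rightarrow> bool" where
  "factsys C E M \<longleftrightarrow>
     E \<subseteq> Arr C \<and> M \<subseteq> Arr C \<and>
     (\<forall>f. iso C f \<longrightarrow> f \<in> E \<and> f \<in> M) \<and>
     (\<forall>e\<in>E. \<forall>e'\<in>E. Cod C e = Dom C e' \<longrightarrow> Comp C e' e \<in> E) \<and>
     (\<forall>m\<in>M. \<forall>m'\<in>M. Cod C m = Dom C m' \<longrightarrow> Comp C m' m \<in> M) \<and>
     (\<forall>f\<in>Arr C. \<exists>e\<in>E. \<exists>m\<in>M. Cod C e = Dom C m \<and> f = Comp C m e) \<and>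
     (\<forall>e\<in>E. \<forall>m\<in>M. \<forall>u\<in>Arr C. \<forall>v\<in>Arr C.
        Dom C u = Dom C e \<and> Cod C u = Dom C m \<and> Dom C v = Cod C e \<and> Cod C v = Cod C m \<and>
        Comp C v e = Comp C m u \<longrightarrow>
        (\<exists>!d. d \<in> hom C (Cod C e) (Dom C m) \<and> Comp C d e = u \<and> Comp C m d = v))"

definition proper_factsys :: "('o,'a) cat \<Rightarrow> 'a set \<Rightarrow> 'a set \<Rightarrow> bool" where
  "proper_factsys C E M \<longleftrightarrow> factsys C E M \<and> (\<forall>e\<in>E. epi C e) \<and> (\<forall>m\<in>M. mono C m)"

definition pullback_stable :: "('o,'a) cat \<Rightarrow> 'a set \<Rightarrow> bool" where
  "pullback_stable C E \<longleftrightarrow> (\<forall>f e p q. e \<in> E \<and> is_pullback C f e p q \<longrightarrow> p \<in> E)"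

definition sub :: "('o,'a) cat \<Rightarrow> 'a set \<Rightarrow> 'o \<Rightarrow> 'a set" where
  "sub C M X = {m \<in> M. Cod C m = X}"

definition sub_le :: "('o,'a) cat \<Rightarrow> 'a \<Rightarrow> 'a \<Rightarrow> bool" where
  "sub_le C m n \<longleftrightarrow> (\<exists>j\<in>Arr C. Dom C j = Dom C m \<and> Cod C j = Dom C n \<and> m = Comp C n j)"

definition sub_eq :: "('o,'a) cat \<Rightarrow> 'a \<Rightarrow> 'a \<Rightarrow> bool" where
  "sub_eq C m n \<longleftrightarrow> sub_le C m n \<and> sub_le C n m"

definition img :: "('o,'a) cat \<Rightarrow> 'a set \<Rightarrow> 'a set \<Rightarrow> 'a \<Rightarrow> 'a \<Rightarrow> 'a" where
  "img C E M f m = (SOME n. n \<in> M \<and> (\<exists>e\<in>E. Cod C e = Dom C n \<and> Comp C f m = Comp C n e))"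

definition gimg :: "('o,'a) cat \<Rightarrow> 'a set \<Rightarrow> 'a set \<Rightarrow> 'a \<Rightarrow> 'a" where
  "gimg C E M g = img C E M g (Idt C (Dom C g))"

definition preim :: "('o,'a) cat \<Rightarrow> 'a \<Rightarrow> 'a \<Rightarrow> 'a" where
  "preim C f n = (SOME p. \<exists>q. is_pullback C f n p q)"

definition closure_op :: "('o,'a) cat \<Rightarrow> 'a set \<Rightarrow> 'a set \<Rightarrow> ('o \<Rightarrow> 'a \<Rightarrow> 'a) \<Rightarrow> bool" where
  "closure_op C E M c \<longleftrightarrow>
     (\<forall>X\<in>Obj C. \<forall>m\<in>sub C M X.
        c X m \<in> sub C M X \<and> sub_le C m (c X m) \<and>
        (\<forall>n\<in>sub C M X. sub_le C m n \<longrightarrow> sub_le C (c X m) (c X n))) \<and>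
     (\<forall>f\<in>Arr C. \<forall>m\<in>sub C M (Dom C f).
        sub_le C (img C E M f (c (Dom C f) m)) (c (Cod C f) (img C E M f m)))"

definition preserving :: "('o,'a) cat \<Rightarrow> 'a set \<Rightarrow> 'a set \<Rightarrow> ('o \<Rightarrow> 'a \<Rightarrow> 'a) \<Rightarrow> 'a \<Rightarrow> bool" where
  "preserving C E M d p \<longleftrightarrow>
     (\<forall>m\<in>sub C M (Dom C p). sub_eq C (img C E M p (d (Dom C p) m)) (d (Cod C p) (img C E M p m)))"

definition compact :: "('o,'a) cat \<Rightarrow> 'a set \<Rightarrow> 'a set \<Rightarrow> ('o \<Rightarrow> 'a \<Rightarrow> 'a) \<Rightarrow> 'o \<Rightarrow> bool" where
  "compact C E M d X \<longleftrightarrow>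
     (\<forall>Y\<in>Obj C. \<forall>P p1 p2. is_product C P p1 p2 X Y \<longrightarrow> preserving C E M d p2)"

definition full_sub :: "('o,'a) cat \<Rightarrow> 'o set \<Rightarrow> ('o,'a) cat" where
  "full_sub C AO = C\<lparr>Obj := AO, Arr := {f \<in> Arr C. Dom C f \<in> AO \<and> Cod C f \<in> AO}\<rparr>"

definition is_reflection :: "('o,'a) cat \<Rightarrow> 'o set \<Rightarrow> ('o \<Rightarrow> 'o) \<Rightarrow> ('o \<Rightarrow> 'a) \<Rightarrow> bool" where
  "is_reflection C AO RO rho \<longleftrightarrow>
     (\<forall>X\<in>Obj C. RO X \<in> AO \<and> rho X \<in> hom C X (RO X) \<and>
        (\<forall>B\<in>AO. \<forall>f\<in>hom C X B. \<exists>!g. g \<in> hom C (RO X) B \<and> Comp C g (rho X) = f))"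

text \<open>The reflector on morphisms, determined by the unit.\<close>
definition Rarr :: "('o,'a) cat \<Rightarrow> ('o \<Rightarrow> 'o) \<Rightarrow> ('o \<Rightarrow> 'a) \<Rightarrow> 'a \<Rightarrow> 'a" where
  "Rarr C RO rho f = (THE g. g \<in> hom C (RO (Dom C f)) (RO (Cod C f)) \<and>
                              Comp C g (rho (Dom C f)) = Comp C (rho (Cod C f)) f)"

text \<open>\<open>c^rho_X(m) = rho_X^{-1}(c_{RX}(Rm))\<close>, with \<open>c_{RX}(Rm) = c_{RX}((Rm)(1))\<close>.\<close>
definition clift :: "('o,'a) cat \<Rightarrow> 'o set \<Rightarrow> 'a set \<Rightarrow> 'a set \<Rightarrow> ('o \<Rightarrow> 'o) \<Rightarrow> ('o \<Rightarrow> 'a)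
                       \<Rightarrow> ('o \<Rightarrow> 'a \<Rightarrow> 'a) \<Rightarrow> 'o \<Rightarrow> 'a \<Rightarrow> 'a" where
  "clift C AO F N RO rho c X m =
     preim C (rho X) (c (RO X) (gimg (full_sub C AO) F N (Rarr C RO rho m)))"

end

theory Submission
  imports Defs
begin

locale cat0 = fixes C :: "('o,'a) cat" assumes iscat: "is_cat C"
begin

abbreviation cmp (infixr "\<cdot>" 75) where "g \<cdot> f \<equiv> Comp C g f"

lemma hom_arr: "f \<in> hom C x y \<Longrightarrow> f \<in> Arr C" by (simp add: hom_def)
lemma hom_dom: "f \<in> hom C x y \<Longrightarrow> Dom C f = x" by (simp add: hom_def)
lemma hom_cod: "f \<in> hom C x y \<Longrightarrow> Cod C f = y" by (simp add: hom_def)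
lemma homI: "f \<in> Arr C \<Longrightarrow> Dom C f = x \<Longrightarrow> Cod C f = y \<Longrightarrow> f \<in> hom C x y" by (simp add: hom_def)
lemma arr_hom: "f \<in> Arr C \<Longrightarrow> f \<in> hom C (Dom C f) (Cod C f)" by (simp add: hom_def)

lemma dom_obj: "f \<in> Arr C \<Longrightarrow> Dom C f \<in> Obj C" using iscat by (simp add: is_cat_def)
lemma cod_obj: "f \<in> Arr C \<Longrightarrow> Cod C f \<in> Obj C" using iscat by (simp add: is_cat_def)
lemma hom_obj1: "f \<in> hom C x y \<Longrightarrow> x \<in> Obj C" using dom_obj by (auto simp: hom_def)
lemma hom_obj2: "f \<in> hom C x y \<Longrightarrow> y \<in> Obj C" using cod_obj by (auto simp: hom_def)

lemma id_hom: "x \<in> Obj C \<Longrightarrow> Idt C x \<in> hom C x x" using iscat by (simp add: is_cat_def)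

lemma comp_hom: "f \<in> hom C x y \<Longrightarrow> g \<in> hom C y z \<Longrightarrow> g \<cdot> f \<in> hom C x z"
proof -
  have H: "\<forall>f\<in>Arr C. \<forall>g\<in>Arr C. Cod C f = Dom C g \<longrightarrow> Comp C g f \<in> hom C (Dom C f) (Cod C g)"
    using iscat unfolding is_cat_def by blast
  assume "f \<in> hom C x y" "g \<in> hom C y z"
  then show ?thesis using H[rule_format, of f g] by (simp add: hom_def)
qed

lemma id_lr: "f \<in> Arr C \<Longrightarrow> Comp C f (Idt C (Dom C f)) = f \<and> Comp C (Idt C (Cod C f)) f = f"
  using iscat unfolding is_cat_def by blast
lemma id_r: "f \<in> hom C x y \<Longrightarrow> f \<cdot> Idt C x = f"
  using id_lr by (auto simp: hom_def)
lemma id_l: "f \<in> hom C x y \<Longrightarrow> Idt C y \<cdot> f = f"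
  using id_lr by (auto simp: hom_def)

lemma assoc: "f \<in> hom C w x \<Longrightarrow> g \<in> hom C x y \<Longrightarrow> h \<in> hom C y z \<Longrightarrow> (h \<cdot> g) \<cdot> f = h \<cdot> g \<cdot> f"
proof -
  have H: "\<forall>f\<in>Arr C. \<forall>g\<in>Arr C. \<forall>h\<in>Arr C. Cod C f = Dom C g \<and> Cod C g = Dom C h \<longrightarrow>
         Comp C h (Comp C g f) = Comp C (Comp C h g) f" using iscat unfolding is_cat_def by blast
  assume "f \<in> hom C w x" "g \<in> hom C x y" "h \<in> hom C y z"
  then show ?thesis using H[rule_format, of f g h] by (simp add: hom_def)
qed

lemma sub_le_refl: "m \<in> Arr C \<Longrightarrow> sub_le C m m"
proof -
  assume m: "m \<in> Arr C"
  have "Idt C (Dom C m) \<in> hom C (Dom C m) (Dom C m)" using m dom_obj id_hom by blast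
  moreover have "m = m \<cdot> Idt C (Dom C m)" using id_lr m by simp
  ultimately show ?thesis unfolding sub_le_def hom_def by auto
qed

lemma sub_le_trans: "m \<in> Arr C \<Longrightarrow> n \<in> Arr C \<Longrightarrow> k \<in> Arr C \<Longrightarrow> sub_le C m n \<Longrightarrow> sub_le C n k \<Longrightarrow> sub_le C m k"
proof -
  assume a: "m \<in> Arr C" "n \<in> Arr C" "k \<in> Arr C" "sub_le C m n" "sub_le C n k"
  then obtain j where j: "j \<in> hom C (Dom C m) (Dom C n)" "m = n \<cdot> j" unfolding sub_le_def hom_def by auto
  obtain i where i: "i \<in> hom C (Dom C n) (Dom C k)" "n = k \<cdot> i" using a unfolding sub_le_def hom_def by auto
  have "i \<cdot> j \<in> hom C (Dom C m) (Dom C k)" using i j comp_hom by blast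
  moreover have "m = k \<cdot> (i \<cdot> j)" using i j a assoc[OF j(1) i(1) arr_hom[of k]] by (simp add: hom_def)
  ultimately show ?thesis unfolding sub_le_def hom_def by auto
qed

lemma sub_eq_trans: "m \<in> Arr C \<Longrightarrow> n \<in> Arr C \<Longrightarrow> k \<in> Arr C \<Longrightarrow> sub_eq C m n \<Longrightarrow> sub_eq C n k \<Longrightarrow> sub_eq C m k"
  unfolding sub_eq_def using sub_le_trans by blast

lemma img_spec:
  assumes "\<exists>n\<in>M. \<exists>e\<in>E. Cod C e = Dom C n \<and> f \<cdot> m = n \<cdot> e"
  shows "img C E M f m \<in> M \<and> (\<exists>e\<in>E. Cod C e = Dom C (img C E M f m) \<and> f \<cdot> m = img C E M f m \<cdot> e)"
  unfolding img_def by (rule someI_ex) (use assms in auto)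

end

context cat0 begin

lemma pb_typ:
  assumes "is_pullback C f g p q"
  shows "p \<in> hom C (Dom C p) (Dom C f)" "q \<in> hom C (Dom C p) (Dom C g)" "f \<cdot> p = g \<cdot> q"
    "f \<in> hom C (Dom C f) (Cod C f)" "g \<in> hom C (Dom C g) (Cod C f)"
proof -
  have B: "f \<in> Arr C \<and> g \<in> Arr C \<and> p \<in> Arr C \<and> q \<in> Arr C \<and>
     Cod C f = Cod C g \<and> Cod C p = Dom C f \<and> Cod C q = Dom C g \<and> Dom C p = Dom C q \<and>
     Comp C f p = Comp C g q"
    using assms unfolding is_pullback_def apply (elim conjE) apply (intro conjI) apply assumption+ done
  then show "p \<in> hom C (Dom C p) (Dom C f)" "q \<in> hom C (Dom C p) (Dom C g)" "f \<cdot> p = g \<cdot> q"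
    "f \<in> hom C (Dom C f) (Cod C f)" "g \<in> hom C (Dom C g) (Cod C f)"
    unfolding hom_def by simp_all
qed

lemma pb_univ:
  assumes "is_pullback C f g p q" "p' \<in> hom C Z (Dom C f)" "q' \<in> hom C Z (Dom C g)" "f \<cdot> p' = g \<cdot> q'"
  shows "\<exists>!u. u \<in> hom C Z (Dom C p) \<and> p \<cdot> u = p' \<and> q \<cdot> u = q'"
proof -
  have H: "\<forall>p'\<in>Arr C. \<forall>q'\<in>Arr C. Cod C p' = Dom C f \<and> Cod C q' = Dom C g \<and> Dom C p' = Dom C q' \<and>
        Comp C f p' = Comp C g q' \<longrightarrow>
        (\<exists>!u. u \<in> hom C (Dom C p') (Dom C p) \<and> Comp C p u = p' \<and> Comp C q u = q')"
    using assms(1) unfolding is_pullback_def by blast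
  have Dp: "Dom C p' = Z" "Dom C q' = Z" using assms(2,3) hom_dom by auto
  have pr: "p' \<in> Arr C" "q' \<in> Arr C" "Cod C p' = Dom C f" "Cod C q' = Dom C g"
    using assms(2,3) hom_arr hom_cod by auto
  show ?thesis using H[rule_format, OF pr(1) pr(2)] pr(3,4) Dp assms(4) by simp
qed

lemma pb_ex:
  assumes "is_pullback C f g p q" "p' \<in> hom C Z (Dom C f)" "q' \<in> hom C Z (Dom C g)" "f \<cdot> p' = g \<cdot> q'"
  shows "\<exists>u. u \<in> hom C Z (Dom C p) \<and> p \<cdot> u = p' \<and> q \<cdot> u = q'"
  using pb_univ[OF assms] by blast

lemma pb_uniq:
  assumes "is_pullback C f g p q" "u1 \<in> hom C Z (Dom C p)" "u2 \<in> hom C Z (Dom C p)"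
    "p \<cdot> u1 = p \<cdot> u2" "q \<cdot> u1 = q \<cdot> u2"
  shows "u1 = u2"
proof -
  note t = pb_typ[OF assms(1)]
  have a: "p \<cdot> u1 \<in> hom C Z (Dom C f)" "q \<cdot> u1 \<in> hom C Z (Dom C g)"
    using comp_hom[OF assms(2) t(1)] comp_hom[OF assms(2) t(2)] by auto
  have b: "f \<cdot> (p \<cdot> u1) = g \<cdot> (q \<cdot> u1)"
  proof -
    have "f \<cdot> (p \<cdot> u1) = (f \<cdot> p) \<cdot> u1" using assoc[OF assms(2) t(1) t(4)] by simp
    also have "\<dots> = (g \<cdot> q) \<cdot> u1" using t(3) by simp
    also have "\<dots> = g \<cdot> (q \<cdot> u1)" using assoc[OF assms(2) t(2) t(5)] by simp
    finally show ?thesis .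
  qed
  obtain w where w: "\<And>y. y \<in> hom C Z (Dom C p) \<and> p \<cdot> y = p \<cdot> u1 \<and> q \<cdot> y = q \<cdot> u1 \<Longrightarrow> y = w"
    using pb_univ[OF assms(1) a b] by (elim ex1E) blast
  have "u1 = w" by (rule w) (use assms in simp)
  moreover have "u2 = w" by (rule w) (use assms in simp)
  ultimately show ?thesis by simp
qed

lemma prod_typ:
  assumes "is_product C P p1 p2 X Y"
  shows "p1 \<in> hom C P X" "p2 \<in> hom C P Y" "P \<in> Obj C" "X \<in> Obj C" "Y \<in> Obj C"
proof -
  have B: "X \<in> Obj C \<and> Y \<in> Obj C \<and> P \<in> Obj C \<and> p1 \<in> hom C P X \<and> p2 \<in> hom C P Y"
    using assms unfolding is_product_def apply (elim conjE) apply (intro conjI) apply assumption+ done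
  then show "p1 \<in> hom C P X" "p2 \<in> hom C P Y" "P \<in> Obj C" "X \<in> Obj C" "Y \<in> Obj C" by simp_all
qed

lemma prod_univ:
  assumes "is_product C P p1 p2 X Y" "f \<in> hom C Z X" "g \<in> hom C Z Y"
  shows "\<exists>!u. u \<in> hom C Z P \<and> p1 \<cdot> u = f \<and> p2 \<cdot> u = g"
proof -
  have H: "\<forall>Z\<in>Obj C. \<forall>f\<in>hom C Z X. \<forall>g\<in>hom C Z Y.
        \<exists>!u. u \<in> hom C Z P \<and> Comp C p1 u = f \<and> Comp C p2 u = g"
    using assms(1) unfolding is_product_def by blast
  show ?thesis using H[rule_format, OF hom_obj1[OF assms(2)] assms(2,3)] .
qed

lemma prod_ex:
  assumes "is_product C P p1 p2 X Y" "f \<in> hom C Z X" "g \<in> hom C Z Y"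
  shows "\<exists>u. u \<in> hom C Z P \<and> p1 \<cdot> u = f \<and> p2 \<cdot> u = g"
  using prod_univ[OF assms] by blast

lemma prod_uniq:
  assumes "is_product C P p1 p2 X Y" "u1 \<in> hom C Z P" "u2 \<in> hom C Z P"
    "p1 \<cdot> u1 = p1 \<cdot> u2" "p2 \<cdot> u1 = p2 \<cdot> u2"
  shows "u1 = u2"
proof -
  have a: "p1 \<cdot> u1 \<in> hom C Z X" "p2 \<cdot> u1 \<in> hom C Z Y"
    using comp_hom[OF assms(2) prod_typ(1)[OF assms(1)]] comp_hom[OF assms(2) prod_typ(2)[OF assms(1)]] by auto
  obtain w where w: "\<And>y. y \<in> hom C Z P \<and> p1 \<cdot> y = p1 \<cdot> u1 \<and> p2 \<cdot> y = p2 \<cdot> u1 \<Longrightarrow> y = w"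
    using prod_univ[OF assms(1) a] by (elim ex1E) blast
  have "u1 = w" by (rule w) (use assms in simp)
  moreover have "u2 = w" by (rule w) (use assms in simp)
  ultimately show ?thesis by simp
qed

lemma pb_mono:
  assumes "is_pullback C f g p q" "is_pullback C f g' p' q'" "sub_le C g g'"
  shows "sub_le C p p'"
proof -
  obtain j where j: "j \<in> Arr C" "Dom C j = Dom C g" "Cod C j = Dom C g'" "g = g' \<cdot> j"
    using assms(3) unfolding sub_le_def by auto
  note t = pb_typ[OF assms(1)] and t' = pb_typ[OF assms(2)]
  have jh: "j \<in> hom C (Dom C g) (Dom C g')" using j homI by auto
  have "q \<in> hom C (Dom C p) (Dom C g)" by (rule t(2))
  then have jq: "j \<cdot> q \<in> hom C (Dom C p) (Dom C g')" using jh comp_hom by blast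
  have "f \<cdot> p = g \<cdot> q" by (rule t(3))
  also have "\<dots> = (g' \<cdot> j) \<cdot> q" using j(4) by simp
  also have "\<dots> = g' \<cdot> (j \<cdot> q)" using assoc[OF t(2) jh t'(5)] by simp
  finally have eqq: "f \<cdot> p = g' \<cdot> (j \<cdot> q)" .
  then obtain u where u: "u \<in> hom C (Dom C p) (Dom C p')" "p' \<cdot> u = p"
    using pb_ex[OF assms(2) t(1) jq eqq] by blast
  then show ?thesis unfolding sub_le_def hom_def by auto
qed

lemma pb_mono_eq:
  assumes "is_pullback C f g p q" "is_pullback C f g' p' q'" "sub_eq C g g'"
  shows "sub_eq C p p'"
  using assms pb_mono unfolding sub_eq_def by blast

end

lemma full_sub_simps[simp]:
  "Obj (full_sub C AO) = AO" "Arr (full_sub C AO) = {f \<in> Arr C. Dom C f \<in> AO \<and> Cod C f \<in> AO}"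
  "Dom (full_sub C AO) = Dom C" "Cod (full_sub C AO) = Cod C" "Idt (full_sub C AO) = Idt C"
  "Comp (full_sub C AO) = Comp C"
  by (simp_all add: full_sub_def)

lemma img_full[simp]: "img (full_sub C AO) F N = img C F N"
  by (simp add: img_def fun_eq_iff)

lemma gimg_full[simp]: "gimg (full_sub C AO) F N g = img C F N g (Idt C (Dom C g))"
  by (simp add: gimg_def)

lemma sub_full[simp]: "sub (full_sub C AO) N Y = sub C N Y"
  by (simp add: sub_def)

lemma sub_le_full: "sub_le (full_sub C AO) m n \<Longrightarrow> sub_le C m n"
  by (auto simp: sub_le_def)

lemma sub_le_full2: "Dom C m \<in> AO \<Longrightarrow> Dom C n \<in> AO \<Longrightarrow> sub_le C m n \<Longrightarrow> sub_le (full_sub C AO) m n"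
  by (auto simp: sub_le_def)

lemma hom_full: "x \<in> AO \<Longrightarrow> y \<in> AO \<Longrightarrow> hom (full_sub C AO) x y = hom C x y"
  by (auto simp: hom_def)


locale fsys = cat0 C for C :: "('o,'a) cat" + fixes E M :: "'a set"
  assumes pfs: "proper_factsys C E M"
begin

lemma fs: "factsys C E M" using pfs unfolding proper_factsys_def by blast

lemma E_arr: "e \<in> E \<Longrightarrow> e \<in> Arr C" using fs unfolding factsys_def by blast
lemma M_arr: "m \<in> M \<Longrightarrow> m \<in> Arr C" using fs unfolding factsys_def by blast
lemma iso_M: "iso C f \<Longrightarrow> f \<in> M" using fs unfolding factsys_def by blast
lemma E_comp: "e \<in> E \<Longrightarrow> e' \<in> E \<Longrightarrow> Cod C e = Dom C e' \<Longrightarrow> e' \<cdot> e \<in> E"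
  using fs unfolding factsys_def by blast
lemma M_comp: "m \<in> M \<Longrightarrow> m' \<in> M \<Longrightarrow> Cod C m = Dom C m' \<Longrightarrow> m' \<cdot> m \<in> M"
  using fs unfolding factsys_def by blast
lemma fact: "f \<in> Arr C \<Longrightarrow> \<exists>e\<in>E. \<exists>m\<in>M. Cod C e = Dom C m \<and> f = m \<cdot> e"
  using fs unfolding factsys_def by blast
lemma E_epi: "e \<in> E \<Longrightarrow> epi C e" using pfs unfolding proper_factsys_def by blast

lemma diag:
  assumes "e \<in> E" "m \<in> M" "u \<in> Arr C" "v \<in> Arr C"
    "Dom C u = Dom C e" "Cod C u = Dom C m" "Dom C v = Cod C e" "Cod C v = Cod C m"
    "v \<cdot> e = m \<cdot> u"
  shows "\<exists>d. d \<in> hom C (Cod C e) (Dom C m) \<and> d \<cdot> e = u \<and> m \<cdot> d = v"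
proof -
  have H: "\<forall>e\<in>E. \<forall>m\<in>M. \<forall>u\<in>Arr C. \<forall>v\<in>Arr C.
        Dom C u = Dom C e \<and> Cod C u = Dom C m \<and> Dom C v = Cod C e \<and> Cod C v = Cod C m \<and>
        Comp C v e = Comp C m u \<longrightarrow>
        (\<exists>!d. d \<in> hom C (Cod C e) (Dom C m) \<and> Comp C d e = u \<and> Comp C m d = v)"
    using fs unfolding factsys_def by blast
  have "\<exists>!d. d \<in> hom C (Cod C e) (Dom C m) \<and> d \<cdot> e = u \<and> m \<cdot> d = v"
    using H[rule_format, OF assms(1-4)] assms(5-9) by blast
  then show ?thesis by blast
qed

lemma epiD:
  assumes "epi C e" "g \<in> Arr C" "h \<in> Arr C" "Dom C g = Cod C e" "Dom C h = Cod C e" "Cod C g = Cod C h"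
    "g \<cdot> e = h \<cdot> e"
  shows "g = h"
proof -
  have H: "\<forall>g\<in>Arr C. \<forall>h\<in>Arr C. Dom C g = Cod C e \<and> Dom C h = Cod C e \<and> Cod C g = Cod C h \<and>
        Comp C g e = Comp C h e \<longrightarrow> g = h" using assms(1) unfolding epi_def by blast
  show ?thesis using H[rule_format, OF assms(2,3)] assms(4-7) by blast
qed

lemma img_C:
  assumes "f \<in> hom C x y" "m \<in> hom C w x"
  shows "img C E M f m \<in> M \<and> (\<exists>e\<in>E. Cod C e = Dom C (img C E M f m) \<and> f \<cdot> m = img C E M f m \<cdot> e)"
proof (rule img_spec)
  have "f \<cdot> m \<in> Arr C" using comp_hom[OF assms(2,1)] hom_arr by blast
  then show "\<exists>n\<in>M. \<exists>e\<in>E. Cod C e = Dom C n \<and> f \<cdot> m = n \<cdot> e" using fact by blast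
qed

lemma fact_le:
  assumes "e \<in> E" "e' \<in> E" "m \<in> M" "m' \<in> M" "Cod C e = Dom C m" "Cod C e' = Dom C m'"
    "m \<cdot> e = m' \<cdot> e'"
  shows "sub_le C m m'"
proof -
  have a: "e \<in> Arr C" "e' \<in> Arr C" "m \<in> Arr C" "m' \<in> Arr C" using assms E_arr M_arr by auto
  have h1: "m \<cdot> e \<in> hom C (Dom C e) (Cod C m)" using comp_hom[OF arr_hom[OF a(1)]] arr_hom[OF a(3)] assms(5) by simp
  have h2: "m' \<cdot> e' \<in> hom C (Dom C e') (Cod C m')" using comp_hom[OF arr_hom[OF a(2)]] arr_hom[OF a(4)] assms(6) by simp
  have "Dom C e' = Dom C e" "Cod C m = Cod C m'" using h1 h2 assms(7) hom_dom hom_cod by metis+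
  then obtain d where d: "d \<in> hom C (Cod C e) (Dom C m')" "m' \<cdot> d = m"
    using diag[OF assms(1) assms(4) a(2) a(3)] assms a by auto
  then show ?thesis unfolding sub_le_def hom_def using assms(5) by auto
qed

lemma fact_eq:
  assumes "e \<in> E" "e' \<in> E" "m \<in> M" "m' \<in> M" "Cod C e = Dom C m" "Cod C e' = Dom C m'"
    "m \<cdot> e = m' \<cdot> e'"
  shows "sub_eq C m m'"
  unfolding sub_eq_def using fact_le assms by metis

lemma M_stable:
  assumes pb: "is_pullback C f g p q" and gM: "g \<in> M"
  shows "p \<in> M"
proof -
  note t = pb_typ[OF pb]
  define S where "S = Dom C p"
  have pA: "p \<in> Arr C" using t(1) hom_arr by blast
  obtain e0 m0 where e0: "e0 \<in> E" and m0: "m0 \<in> M" and em: "Cod C e0 = Dom C m0" and pe: "p = m0 \<cdot> e0"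
    using fact[OF pA] by blast
  define S0 where "S0 = Cod C e0"
  have e0h: "e0 \<in> hom C S S0" using E_arr[OF e0] pe t(1) S_def S0_def em
    by (metis arr_hom comp_hom hom_dom M_arr m0)
  have m0h: "m0 \<in> hom C S0 (Dom C f)" using M_arr[OF m0] pe t(1) S0_def em e0h
    by (metis arr_hom comp_hom hom_cod hom_dom)
  have gh: "g \<in> hom C (Dom C g) (Cod C f)" by (rule t(5))
  have fm0: "f \<cdot> m0 \<in> hom C S0 (Cod C f)" using comp_hom[OF m0h t(4)] .
  have qh: "q \<in> hom C S (Dom C g)" using t(2) S_def by simp
  have ph: "p \<in> hom C S (Dom C f)" using t(1) S_def by simp
  have sq: "(f \<cdot> m0) \<cdot> e0 = g \<cdot> q"
  proof -
    have "(f \<cdot> m0) \<cdot> e0 = f \<cdot> (m0 \<cdot> e0)" by (rule assoc[OF e0h m0h t(4)])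
    also have "\<dots> = f \<cdot> p" using pe by simp
    also have "\<dots> = g \<cdot> q" by (rule t(3))
    finally show ?thesis .
  qed
  obtain d0 where d0: "d0 \<in> hom C S0 (Dom C g)" "d0 \<cdot> e0 = q" "g \<cdot> d0 = f \<cdot> m0"
    using diag[OF e0 gM hom_arr[OF qh] hom_arr[OF fm0]] e0h qh fm0 gh sq S0_def
    by (metis hom_cod hom_dom)
  obtain w where w: "w \<in> hom C S0 S" "p \<cdot> w = m0" "q \<cdot> w = d0"
    using pb_ex[OF pb m0h d0(1)] d0(3) S_def by metis
  have we: "w \<cdot> e0 \<in> hom C S S" using comp_hom[OF e0h w(1)] .
  have idS: "Idt C S \<in> hom C S S" using id_hom hom_obj1[OF ph] by blast
  have "w \<cdot> e0 = Idt C S"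
  proof (rule pb_uniq[OF pb])
    show "w \<cdot> e0 \<in> hom C S (Dom C p)" using we S_def by simp
    show "Idt C S \<in> hom C S (Dom C p)" using idS S_def by simp
    have "p \<cdot> (w \<cdot> e0) = (p \<cdot> w) \<cdot> e0" using assoc[OF e0h w(1) ph] by simp
    also have "\<dots> = p" using w(2) pe by simp
    also have "\<dots> = p \<cdot> Idt C S" using id_r[OF ph] by simp
    finally show "p \<cdot> (w \<cdot> e0) = p \<cdot> Idt C S" .
    have "q \<cdot> (w \<cdot> e0) = (q \<cdot> w) \<cdot> e0" using assoc[OF e0h w(1) qh] by simp
    also have "\<dots> = q" using w(3) d0(2) by simp
    also have "\<dots> = q \<cdot> Idt C S" using id_r[OF qh] by simp
    finally show "q \<cdot> (w \<cdot> e0) = q \<cdot> Idt C S" .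
  qed
  have idS0: "Idt C S0 \<in> hom C S0 S0" using id_hom hom_obj2[OF e0h] by blast
  have ew: "e0 \<cdot> w \<in> hom C S0 S0" using comp_hom[OF w(1) e0h] .
  have "e0 \<cdot> w = Idt C S0"
  proof (rule epiD[OF E_epi[OF e0]])
    show "e0 \<cdot> w \<in> Arr C" "Idt C S0 \<in> Arr C" using ew idS0 hom_arr by blast+
    show "Dom C (e0 \<cdot> w) = Cod C e0" "Dom C (Idt C S0) = Cod C e0" "Cod C (e0 \<cdot> w) = Cod C (Idt C S0)"
      using ew idS0 hom_dom hom_cod S0_def by metis+
    have "(e0 \<cdot> w) \<cdot> e0 = e0 \<cdot> (w \<cdot> e0)" using assoc[OF e0h w(1) e0h] .
    also have "\<dots> = e0" using \<open>w \<cdot> e0 = Idt C S\<close> id_r[OF e0h] by simp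
    also have "\<dots> = Idt C S0 \<cdot> e0" using id_l[OF e0h] by simp
    finally show "(e0 \<cdot> w) \<cdot> e0 = Idt C S0 \<cdot> e0" .
  qed
  have "iso C e0" unfolding iso_def
    using E_arr[OF e0] w(1) \<open>w \<cdot> e0 = Idt C S\<close> \<open>e0 \<cdot> w = Idt C S0\<close> e0h hom_dom hom_cod by metis
  then have "e0 \<in> M" by (rule iso_M)
  then show ?thesis using M_comp[OF _ m0 em] pe by simp
qed

end

context cat0 begin
lemma sq_ext:
  assumes "g \<cdot> f = g' \<cdot> f'" "z \<in> hom C w x" "f \<in> hom C x y" "g \<in> hom C y v" "f' \<in> hom C x y'" "g' \<in> hom C y' v"
  shows "g \<cdot> (f \<cdot> z) = g' \<cdot> (f' \<cdot> z)"
proof -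
  have "g \<cdot> (f \<cdot> z) = (g \<cdot> f) \<cdot> z" using assoc[OF assms(2,3,4)] by simp
  also have "\<dots> = (g' \<cdot> f') \<cdot> z" using assms(1) by simp
  also have "\<dots> = g' \<cdot> (f' \<cdot> z)" using assoc[OF assms(2,5,6)] by simp
  finally show ?thesis .
qed

lemma comp_typ:
  assumes "n \<cdot> e = f" "f \<in> hom C x y" "n \<in> Arr C" "e \<in> Arr C" "Cod C e = Dom C n"
  shows "e \<in> hom C x (Dom C n)" "n \<in> hom C (Dom C n) y"
proof -
  have h: "n \<cdot> e \<in> hom C (Dom C e) (Cod C n)" using comp_hom[OF arr_hom[OF assms(4)]] arr_hom[OF assms(3)] assms(5) by simp
  then have "Dom C e = x" "Cod C n = y" using assms(1,2) hom_dom hom_cod by metis+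
  then show "e \<in> hom C x (Dom C n)" "n \<in> hom C (Dom C n) y" using assms(3,4,5) homI by auto
qed
end

lemma full_sub_cat:
  assumes "is_cat C" "AO \<subseteq> Obj C"
  shows "is_cat (full_sub C AO)"
proof -
  interpret cat0 C by (rule cat0.intro) (rule assms(1))
  show ?thesis unfolding is_cat_def
  proof (intro conjI ballI impI)
    fix x assume "x \<in> Obj (full_sub C AO)"
    then show "Idt (full_sub C AO) x \<in> hom (full_sub C AO) x x"
      using hom_full[of x AO x C] id_hom assms(2) by auto
  next
    fix f g assume "f \<in> Arr (full_sub C AO)" "g \<in> Arr (full_sub C AO)" "Cod (full_sub C AO) f = Dom (full_sub C AO) g"
    then have a: "f \<in> Arr C" "g \<in> Arr C" "Cod C f = Dom C g" "Dom C f \<in> AO" "Cod C g \<in> AO" by auto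
    have "g \<cdot> f \<in> hom C (Dom C f) (Cod C g)" using comp_hom[OF arr_hom[OF a(1)]] arr_hom[OF a(2)] a(3) by simp
    then show "Comp (full_sub C AO) g f \<in> hom (full_sub C AO) (Dom (full_sub C AO) f) (Cod (full_sub C AO) g)"
      using hom_full[OF a(4,5), of C] by simp
  next
    fix f g h assume "f \<in> Arr (full_sub C AO)" "g \<in> Arr (full_sub C AO)" "h \<in> Arr (full_sub C AO)"
      "Cod (full_sub C AO) f = Dom (full_sub C AO) g \<and> Cod (full_sub C AO) g = Dom (full_sub C AO) h"
    then have a: "f \<in> Arr C" "g \<in> Arr C" "h \<in> Arr C" "Cod C f = Dom C g" "Cod C g = Dom C h" by auto
    have "(h \<cdot> g) \<cdot> f = h \<cdot> (g \<cdot> f)" using assoc[OF arr_hom[OF a(1)] _ arr_hom[OF a(3)], of g] arr_hom[OF a(2)] a(4,5) by simp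
    then show "Comp (full_sub C AO) h (Comp (full_sub C AO) g f) = Comp (full_sub C AO) (Comp (full_sub C AO) h g) f"
      by simp
  qed (auto simp: dom_obj cod_obj id_lr)
qed

locale setting = fsys C E M for C :: "('o,'a) cat" and E M :: "'a set" +
  fixes AO :: "'o set" and F N :: "'a set" and RO :: "'o \<Rightarrow> 'o" and rho :: "'o \<Rightarrow> 'a"
    and c :: "'o \<Rightarrow> 'a \<Rightarrow> 'a" and X :: 'o
  assumes fcX: "finitely_complete C"
    and AOsub: "AO \<subseteq> Obj C"
    and fsA: "proper_factsys (full_sub C AO) F N"
    and refl: "is_reflection C AO RO rho"
    and NM: "N \<subseteq> M"
    and RE: "\<forall>e\<in>E. Rarr C RO rho e \<in> F"
    and Estab: "pullback_stable C E"
    and FE: "F \<subseteq> E"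
    and clop: "closure_op (full_sub C AO) F N c"
    and XObj: "X \<in> Obj C"
    and Rprod: "\<forall>Y\<in>Obj C. \<forall>P p1 p2. is_product C P p1 p2 X Y \<longrightarrow>
                  is_product (full_sub C AO) (RO P) (Rarr C RO rho p1) (Rarr C RO rho p2) (RO X) (RO Y)"
    and rhoE: "rho X \<in> E"
    and cmpt: "compact (full_sub C AO) F N c (RO X)"
begin

abbreviation R where "R f \<equiv> Rarr C RO rho f"

sublocale A: cat0 "full_sub C AO" by (rule cat0.intro, rule full_sub_cat[OF iscat AOsub])

lemma fsA': "factsys (full_sub C AO) F N" using fsA unfolding proper_factsys_def by blast
lemma FA: "F \<subseteq> Arr (full_sub C AO)" using fsA' unfolding factsys_def by (elim conjE) assumption
lemma NA: "N \<subseteq> Arr (full_sub C AO)" using fsA' unfolding factsys_def by (elim conjE) assumption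
lemma F_arr: "e \<in> F \<Longrightarrow> e \<in> Arr C \<and> Dom C e \<in> AO \<and> Cod C e \<in> AO"
  using FA by auto
lemma N_arr: "e \<in> N \<Longrightarrow> e \<in> Arr C \<and> Dom C e \<in> AO \<and> Cod C e \<in> AO"
  using NA by auto
lemma factA: "f \<in> Arr C \<Longrightarrow> Dom C f \<in> AO \<Longrightarrow> Cod C f \<in> AO \<Longrightarrow> \<exists>e\<in>F. \<exists>m\<in>N. Cod C e = Dom C m \<and> f = m \<cdot> e"
proof -
  have H: "\<forall>f\<in>Arr (full_sub C AO). \<exists>e\<in>F. \<exists>m\<in>N. Cod (full_sub C AO) e = Dom (full_sub C AO) m \<and> f = Comp (full_sub C AO) m e"
    using fsA' unfolding factsys_def by (elim conjE) assumption
  assume "f \<in> Arr C" "Dom C f \<in> AO" "Cod C f \<in> AO"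
  then show ?thesis using H[rule_format, of f] by simp
qed

lemma imgA:
  assumes "f \<in> hom C x y" "m \<in> hom C w x" "w \<in> AO" "y \<in> AO"
  shows "img C F N f m \<in> N \<and> (\<exists>e\<in>F. Cod C e = Dom C (img C F N f m) \<and> f \<cdot> m = img C F N f m \<cdot> e)"
proof (rule img_spec)
  have "f \<cdot> m \<in> hom C w y" using comp_hom[OF assms(2,1)] .
  then show "\<exists>n\<in>N. \<exists>e\<in>F. Cod C e = Dom C n \<and> f \<cdot> m = n \<cdot> e" using factA assms(3,4) hom_arr hom_dom hom_cod
    by metis
qed

lemma refl_all: "Y \<in> Obj C \<Longrightarrow> RO Y \<in> AO \<and> rho Y \<in> hom C Y (RO Y) \<and>
        (\<forall>B\<in>AO. \<forall>f\<in>hom C Y B. \<exists>!g. g \<in> hom C (RO Y) B \<and> Comp C g (rho Y) = f)"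
  using refl unfolding is_reflection_def by (rule bspec)

lemma rho_hom: "Y \<in> Obj C \<Longrightarrow> RO Y \<in> AO \<and> rho Y \<in> hom C Y (RO Y)"
  using refl_all by simp

lemma refl_univ: "Y \<in> Obj C \<Longrightarrow> B \<in> AO \<Longrightarrow> f \<in> hom C Y B \<Longrightarrow> \<exists>!g. g \<in> hom C (RO Y) B \<and> g \<cdot> rho Y = f"
proof -
  assume a: "Y \<in> Obj C" "B \<in> AO" "f \<in> hom C Y B"
  have H: "\<forall>B\<in>AO. \<forall>f\<in>hom C Y B. \<exists>!g. g \<in> hom C (RO Y) B \<and> Comp C g (rho Y) = f"
    using refl_all[OF a(1)] by (elim conjE)
  show ?thesis using H[rule_format, OF a(2,3)] .
qed

lemma refl_uniq:
  assumes "Y \<in> Obj C" "B \<in> AO" "g1 \<in> hom C (RO Y) B" "g2 \<in> hom C (RO Y) B" "g1 \<cdot> rho Y = g2 \<cdot> rho Y"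
  shows "g1 = g2"
proof -
  have gh: "g1 \<cdot> rho Y \<in> hom C Y B" using comp_hom[OF conjunct2[OF rho_hom[OF assms(1)]] assms(3)] .
  obtain w where w: "\<And>y. y \<in> hom C (RO Y) B \<and> y \<cdot> rho Y = g1 \<cdot> rho Y \<Longrightarrow> y = w"
    using refl_univ[OF assms(1,2) gh] by (elim ex1E) blast
  have "g1 = w" by (rule w) (use assms in simp)
  moreover have "g2 = w" by (rule w) (use assms in simp)
  ultimately show ?thesis by simp
qed

lemma Rarr_spec:
  assumes "f \<in> hom C x y"
  shows "R f \<in> hom C (RO x) (RO y) \<and> R f \<cdot> rho x = rho y \<cdot> f"
proof -
  have x: "x \<in> Obj C" using hom_obj1[OF assms] .
  have y: "y \<in> Obj C" using hom_obj2[OF assms] .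
  have "rho y \<cdot> f \<in> hom C x (RO y)" using comp_hom[OF assms conjunct2[OF rho_hom[OF y]]] .
  then have "\<exists>!g. g \<in> hom C (RO x) (RO y) \<and> g \<cdot> rho x = rho y \<cdot> f"
    using refl_univ[OF x conjunct1[OF rho_hom[OF y]]] by simp
  then have "(THE g. g \<in> hom C (RO x) (RO y) \<and> g \<cdot> rho x = rho y \<cdot> f) \<in> hom C (RO x) (RO y) \<and>
      (THE g. g \<in> hom C (RO x) (RO y) \<and> g \<cdot> rho x = rho y \<cdot> f) \<cdot> rho x = rho y \<cdot> f" by (rule theI')
  moreover have "Dom C f = x" "Cod C f = y" using hom_dom[OF assms] hom_cod[OF assms] by auto
  ultimately show ?thesis unfolding Rarr_def by simp
qed

lemma Rarr_unique:
  assumes "f \<in> hom C x y" "h \<in> hom C (RO x) (RO y)" "h \<cdot> rho x = rho y \<cdot> f"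
  shows "R f = h"
proof -
  have x: "x \<in> Obj C" using hom_obj1[OF assms(1)] .
  have y: "y \<in> Obj C" using hom_obj2[OF assms(1)] .
  note rs = Rarr_spec[OF assms(1)]
  show ?thesis using refl_uniq[OF x conjunct1[OF rho_hom[OF y]] conjunct1[OF rs] assms(2)] conjunct2[OF rs] assms(3) by simp
qed

lemma Rarr_comp:
  assumes f: "f \<in> hom C x y" and g: "g \<in> hom C y z"
  shows "R (g \<cdot> f) = R g \<cdot> R f"
proof (rule Rarr_unique)
  show "g \<cdot> f \<in> hom C x z" using comp_hom[OF f g] .
  note sf = Rarr_spec[OF f] and sg = Rarr_spec[OF g]
  show "R g \<cdot> R f \<in> hom C (RO x) (RO z)" using comp_hom[OF conjunct1[OF sf] conjunct1[OF sg]] .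
  have rx: "rho x \<in> hom C x (RO x)" using rho_hom[OF hom_obj1[OF f]] by simp
  have ry: "rho y \<in> hom C y (RO y)" using rho_hom[OF hom_obj1[OF g]] by simp
  have rz: "rho z \<in> hom C z (RO z)" using rho_hom[OF hom_obj2[OF g]] by simp
  have "(R g \<cdot> R f) \<cdot> rho x = R g \<cdot> (R f \<cdot> rho x)" using assoc[OF rx conjunct1[OF sf] conjunct1[OF sg]] .
  also have "\<dots> = R g \<cdot> (rho y \<cdot> f)" using sf by simp
  also have "\<dots> = (R g \<cdot> rho y) \<cdot> f" using assoc[OF f ry conjunct1[OF sg]] by simp
  also have "\<dots> = (rho z \<cdot> g) \<cdot> f" using sg by simp
  also have "\<dots> = rho z \<cdot> (g \<cdot> f)" using assoc[OF f g rz] .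
  finally show "(R g \<cdot> R f) \<cdot> rho x = rho z \<cdot> (g \<cdot> f)" .
qed

lemma joint_monic:
  assumes pr: "is_product (full_sub C AO) RP \<pi>1 \<pi>2 RX RY"
    and z: "z1 \<in> hom C Z RP" "z2 \<in> hom C Z RP" and e1: "\<pi>1 \<cdot> z1 = \<pi>1 \<cdot> z2" and e2: "\<pi>2 \<cdot> z1 = \<pi>2 \<cdot> z2"
  shows "z1 = z2"
proof -
  have RP: "RP \<in> AO" and RX: "RX \<in> AO" and RY: "RY \<in> AO" using A.prod_typ[OF pr] by simp_all
  have p1: "\<pi>1 \<in> hom C RP RX" and p2: "\<pi>2 \<in> hom C RP RY"
    using A.prod_typ[OF pr] hom_full[OF RP RX, where C=C] hom_full[OF RP RY, where C=C] by auto
  have Z: "Z \<in> Obj C" using hom_obj1[OF z(1)] .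
  have rZ: "RO Z \<in> AO" "rho Z \<in> hom C Z (RO Z)" using rho_hom[OF Z] by auto
  obtain g1 where g1: "g1 \<in> hom C (RO Z) RP" "g1 \<cdot> rho Z = z1" using ex1_implies_ex[OF refl_univ[OF Z RP z(1)]] by blast
  obtain g2 where g2: "g2 \<in> hom C (RO Z) RP" "g2 \<cdot> rho Z = z2" using ex1_implies_ex[OF refl_univ[OF Z RP z(2)]] by blast
  have q1: "\<pi>1 \<cdot> g1 = \<pi>1 \<cdot> g2"
  proof (rule refl_uniq[OF Z RX])
    show "\<pi>1 \<cdot> g1 \<in> hom C (RO Z) RX" "\<pi>1 \<cdot> g2 \<in> hom C (RO Z) RX" using comp_hom[OF g1(1) p1] comp_hom[OF g2(1) p1] by auto
    show "(\<pi>1 \<cdot> g1) \<cdot> rho Z = (\<pi>1 \<cdot> g2) \<cdot> rho Z"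
    proof -
      have "(\<pi>1 \<cdot> g1) \<cdot> rho Z = \<pi>1 \<cdot> z1" using assoc[OF rZ(2) g1(1) p1] g1(2) by simp
      also have "\<dots> = \<pi>1 \<cdot> z2" by (rule e1)
      also have "\<dots> = (\<pi>1 \<cdot> g2) \<cdot> rho Z" using assoc[OF rZ(2) g2(1) p1] g2(2) by simp
      finally show ?thesis .
    qed
  qed
  have q2: "\<pi>2 \<cdot> g1 = \<pi>2 \<cdot> g2"
  proof (rule refl_uniq[OF Z RY])
    show "\<pi>2 \<cdot> g1 \<in> hom C (RO Z) RY" "\<pi>2 \<cdot> g2 \<in> hom C (RO Z) RY" using comp_hom[OF g1(1) p2] comp_hom[OF g2(1) p2] by auto
    show "(\<pi>2 \<cdot> g1) \<cdot> rho Z = (\<pi>2 \<cdot> g2) \<cdot> rho Z"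
    proof -
      have "(\<pi>2 \<cdot> g1) \<cdot> rho Z = \<pi>2 \<cdot> z1" using assoc[OF rZ(2) g1(1) p2] g1(2) by simp
      also have "\<dots> = \<pi>2 \<cdot> z2" by (rule e2)
      also have "\<dots> = (\<pi>2 \<cdot> g2) \<cdot> rho Z" using assoc[OF rZ(2) g2(1) p2] g2(2) by simp
      finally show ?thesis .
    qed
  qed
  have "g1 \<in> hom (full_sub C AO) (RO Z) RP" "g2 \<in> hom (full_sub C AO) (RO Z) RP"
    using g1(1) g2(1) hom_full[OF rZ(1) RP, where C=C] by auto
  from A.prod_uniq[OF pr this] q1 q2 have gg: "g1 = g2" by simp
  have "z1 = g1 \<cdot> rho Z" using g1(2) by simp
  also have "\<dots> = g2 \<cdot> rho Z" using gg by simp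
  also have "\<dots> = z2" using g2(2) by simp
  finally show ?thesis .
qed

lemma preim_pb:
  assumes "f \<in> Arr C" "g \<in> Arr C" "Cod C f = Cod C g"
  shows "\<exists>q. is_pullback C f g (preim C f g) q"
proof -
  have H: "\<forall>f\<in>Arr C. \<forall>g\<in>Arr C. Cod C f = Cod C g \<longrightarrow> (\<exists>p q. is_pullback C f g p q)"
    using fcX unfolding finitely_complete_def by (rule conjunct2)
  have "\<exists>p q. is_pullback C f g p q" using H[rule_format, OF assms] .
  then show ?thesis unfolding preim_def by (rule someI_ex[where P = "\<lambda>p. \<exists>q. is_pullback C f g p q"])
qed

lemma pb_exists:
  assumes "f \<in> Arr C" "g \<in> Arr C" "Cod C f = Cod C g"
  shows "\<exists>p q. is_pullback C f g p q"
proof -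
  have H: "\<forall>f\<in>Arr C. \<forall>g\<in>Arr C. Cod C f = Cod C g \<longrightarrow> (\<exists>p q. is_pullback C f g p q)"
    using fcX unfolding finitely_complete_def by (rule conjunct2)
  show ?thesis using H[rule_format, OF assms] .
qed

lemma clop_H: "\<forall>X\<in>Obj (full_sub C AO). \<forall>m\<in>sub (full_sub C AO) N X.
        c X m \<in> sub (full_sub C AO) N X \<and> sub_le (full_sub C AO) m (c X m) \<and>
        (\<forall>n\<in>sub (full_sub C AO) N X. sub_le (full_sub C AO) m n \<longrightarrow> sub_le (full_sub C AO) (c X m) (c X n))"
  using clop unfolding closure_op_def by (rule conjunct1)

lemma clop_sub: "Y \<in> AO \<Longrightarrow> n \<in> sub C N Y \<Longrightarrow> c Y n \<in> sub C N Y"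
  using clop_H by simp

lemma clop_mono: "Y \<in> AO \<Longrightarrow> n \<in> sub C N Y \<Longrightarrow> n' \<in> sub C N Y \<Longrightarrow> sub_le (full_sub C AO) n n'
   \<Longrightarrow> sub_le (full_sub C AO) (c Y n) (c Y n')"
  using clop_H by simp

end

context cat0 begin
lemma pb_ex':
  assumes "is_pullback C f g p q" "f \<in> hom C A0 D" "g \<in> hom C B0 D" "p \<in> hom C S0 A0"
    "p' \<in> hom C Z A0" "q' \<in> hom C Z B0" "f \<cdot> p' = g \<cdot> q'"
  shows "\<exists>u. u \<in> hom C Z S0 \<and> p \<cdot> u = p' \<and> q \<cdot> u = q'"
proof -
  have "Dom C f = A0" "Dom C g = B0" "Dom C p = S0" using assms hom_dom by auto
  then show ?thesis using pb_ex[OF assms(1), of p' Z q'] assms(5-7) by simp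
qed

lemma pb_uniq':
  assumes "is_pullback C f g p q" "p \<in> hom C S0 A0" "u1 \<in> hom C Z S0" "u2 \<in> hom C Z S0"
    "p \<cdot> u1 = p \<cdot> u2" "q \<cdot> u1 = q \<cdot> u2"
  shows "u1 = u2"
proof -
  have "Dom C p = S0" using assms hom_dom by auto
  then show ?thesis using pb_uniq[OF assms(1), of u1 Z u2] assms(3-6) by simp
qed
end

context setting begin

lemma bc:
  assumes prod: "is_product C P p1 p2 X Y"
    and RPprod: "is_product (full_sub C AO) (RO P) (R p1) (R p2) (RO X) (RO Y)"
    and kkN: "kk \<in> N" and kkC: "Cod C kk = RO P"
    and pbs: "is_pullback C (rho P) kk s s'"
    and n'N: "n' \<in> N" and f'F: "f' \<in> F" and f'n': "Cod C f' = Dom C n'" and eqf: "R p2 \<cdot> kk = n' \<cdot> f'"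
    and pbq: "is_pullback C (rho Y) n' q q'"
  shows "sub_eq C (img C E M p2 s) q"
proof -
  note pt = prod_typ[OF prod]
  have p1: "p1 \<in> hom C P X" and p2: "p2 \<in> hom C P Y" using pt by auto
  have rP: "rho P \<in> hom C P (RO P)" using rho_hom[OF pt(3)] by simp
  have rX: "rho X \<in> hom C X (RO X)" using rho_hom[OF pt(4)] by simp
  have rY: "rho Y \<in> hom C Y (RO Y)" using rho_hom[OF pt(5)] by simp
  have Rp1: "R p1 \<in> hom C (RO P) (RO X)" and sq1: "R p1 \<cdot> rho P = rho X \<cdot> p1" using Rarr_spec[OF p1] by auto
  have Rp2: "R p2 \<in> hom C (RO P) (RO Y)" and sq2: "R p2 \<cdot> rho P = rho Y \<cdot> p2" using Rarr_spec[OF p2] by auto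
  define K where "K = Dom C kk"
  have kkh: "kk \<in> hom C K (RO P)" using N_arr[OF kkN] kkC K_def homI by auto
  note ts = pb_typ[OF pbs]
  define S where "S = Dom C s"
  have sh: "s \<in> hom C S P" using ts(1) hom_dom[OF rP] S_def by simp
  have s'h: "s' \<in> hom C S K" using ts(2) K_def S_def by simp
  have eqs: "rho P \<cdot> s = kk \<cdot> s'" using ts(3) .
  define N' where "N' = Dom C n'"
  have Rkk: "R p2 \<cdot> kk \<in> hom C K (RO Y)" using comp_hom[OF kkh Rp2] .
  have f'h: "f' \<in> hom C K N'" and n'h: "n' \<in> hom C N' (RO Y)"
    using comp_typ[OF eqf[symmetric] Rkk conjunct1[OF N_arr[OF n'N]] conjunct1[OF F_arr[OF f'F]] f'n'] N'_def by auto
  note tq = pb_typ[OF pbq]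
  define Q where "Q = Dom C q"
  have qh: "q \<in> hom C Q Y" using tq(1) hom_dom[OF rY] Q_def by simp
  have q'h: "q' \<in> hom C Q N'" using tq(2) Q_def N'_def by simp
  have eqq: "rho Y \<cdot> q = n' \<cdot> q'" using tq(3) .
  have p2s: "p2 \<cdot> s \<in> hom C S Y" using comp_hom[OF sh p2] .
  have f's': "f' \<cdot> s' \<in> hom C S N'" using comp_hom[OF s'h f'h] .
  have eqt: "rho Y \<cdot> (p2 \<cdot> s) = n' \<cdot> (f' \<cdot> s')"
  proof -
    have "rho Y \<cdot> (p2 \<cdot> s) = R p2 \<cdot> (rho P \<cdot> s)" using sq_ext[OF sq2[symmetric] sh p2 rY rP Rp2] .
    also have "\<dots> = R p2 \<cdot> (kk \<cdot> s')" using eqs by simp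
    also have "\<dots> = n' \<cdot> (f' \<cdot> s')" using sq_ext[OF eqf s'h kkh Rp2 f'h n'h] .
    finally show ?thesis .
  qed
  obtain t where th: "t \<in> hom C S Q" and qt: "q \<cdot> t = p2 \<cdot> s" and q't: "q' \<cdot> t = f' \<cdot> s'"
    using pb_ex'[OF pbq rY n'h qh p2s f's' eqt] by blast
  have f'E: "f' \<in> E" using FE f'F by blast
  obtain w1 w2 where pbW: "is_pullback C q' f' w1 w2"
    using pb_exists[OF hom_arr[OF q'h] hom_arr[OF f'h]] hom_cod[OF q'h] hom_cod[OF f'h] by auto
  have w1E: "w1 \<in> E" using Estab f'E pbW unfolding pullback_stable_def by blast
  note tw = pb_typ[OF pbW]
  define W where "W = Dom C w1"
  have w1h: "w1 \<in> hom C W Q" using tw(1) hom_dom[OF q'h] W_def by simp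
  have w2h: "w2 \<in> hom C W K" using tw(2) hom_dom[OF f'h] W_def by simp
  have eqw: "q' \<cdot> w1 = f' \<cdot> w2" using tw(3) .
  obtain u where uh: "u \<in> hom C S W" and w1u: "w1 \<cdot> u = t" and w2u: "w2 \<cdot> u = s'"
    using pb_ex'[OF pbW q'h f'h w1h th s'h q't] by blast
  have kkw2: "kk \<cdot> w2 \<in> hom C W (RO P)" using comp_hom[OF w2h kkh] .
  have fwh: "R p1 \<cdot> (kk \<cdot> w2) \<in> hom C W (RO X)" using comp_hom[OF kkw2 Rp1] .
  have p1s: "p1 \<cdot> s \<in> hom C S X" using comp_hom[OF sh p1] .
  have pbu: "is_pullback C (R p1 \<cdot> (kk \<cdot> w2)) (rho X) u (p1 \<cdot> s)"
    unfolding is_pullback_def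
  proof (intro conjI ballI impI)
    show "R p1 \<cdot> (kk \<cdot> w2) \<in> Arr C" "rho X \<in> Arr C" "u \<in> Arr C" "p1 \<cdot> s \<in> Arr C"
      using hom_arr[OF fwh] hom_arr[OF rX] hom_arr[OF uh] hom_arr[OF p1s] by simp_all
    show "Cod C (R p1 \<cdot> (kk \<cdot> w2)) = Cod C (rho X)" "Cod C u = Dom C (R p1 \<cdot> (kk \<cdot> w2))"
      "Cod C (p1 \<cdot> s) = Dom C (rho X)" "Dom C u = Dom C (p1 \<cdot> s)"
      using hom_dom[OF fwh] hom_dom[OF rX] hom_dom[OF uh] hom_dom[OF p1s]
        hom_cod[OF fwh] hom_cod[OF rX] hom_cod[OF uh] hom_cod[OF p1s] by simp_all
    show "(R p1 \<cdot> (kk \<cdot> w2)) \<cdot> u = rho X \<cdot> (p1 \<cdot> s)"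
    proof -
      have "(R p1 \<cdot> (kk \<cdot> w2)) \<cdot> u = R p1 \<cdot> ((kk \<cdot> w2) \<cdot> u)" using assoc[OF uh kkw2 Rp1] .
      also have "\<dots> = R p1 \<cdot> (kk \<cdot> (w2 \<cdot> u))" using assoc[OF uh w2h kkh] by simp
      also have "\<dots> = R p1 \<cdot> (kk \<cdot> s')" using w2u by simp
      also have "\<dots> = R p1 \<cdot> (rho P \<cdot> s)" using eqs by simp
      also have "\<dots> = rho X \<cdot> (p1 \<cdot> s)" using sq_ext[OF sq1 sh rP Rp1 p1 rX] .
      finally show ?thesis .
    qed
  next
    fix a b assume a: "a \<in> Arr C" and b: "b \<in> Arr C" and
      ab: "Cod C a = Dom C (R p1 \<cdot> (kk \<cdot> w2)) \<and> Cod C b = Dom C (rho X) \<and> Dom C a = Dom C b \<and>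
         (R p1 \<cdot> (kk \<cdot> w2)) \<cdot> a = rho X \<cdot> b"
    define Z where "Z = Dom C a"
    have c1: "Cod C a = W" using conjunct1[OF ab] hom_dom[OF fwh] by simp
    have c2: "Cod C b = X" using conjunct1[OF conjunct2[OF ab]] hom_dom[OF rX] by simp
    have c3: "Dom C b = Z" using conjunct1[OF conjunct2[OF conjunct2[OF ab]]] Z_def by simp
    have eab: "(R p1 \<cdot> (kk \<cdot> w2)) \<cdot> a = rho X \<cdot> b" using conjunct2[OF conjunct2[OF conjunct2[OF ab]]] .
    have ah: "a \<in> hom C Z W" using homI[OF a Z_def[symmetric] c1] .
    have bh: "b \<in> hom C Z X" using homI[OF b c3 c2] .
    have dd: "Dom C a = Z" "Dom C u = S" using Z_def hom_dom[OF uh] by auto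
    have w1a: "w1 \<cdot> a \<in> hom C Z Q" using comp_hom[OF ah w1h] .
    have w2a: "w2 \<cdot> a \<in> hom C Z K" using comp_hom[OF ah w2h] .
    have qw1a: "q \<cdot> (w1 \<cdot> a) \<in> hom C Z Y" using comp_hom[OF w1a qh] .
    have kw2a: "kk \<cdot> (w2 \<cdot> a) \<in> hom C Z (RO P)" using comp_hom[OF w2a kkh] .
    have eqa: "q' \<cdot> (w1 \<cdot> a) = f' \<cdot> (w2 \<cdot> a)" using sq_ext[OF eqw ah w1h q'h w2h f'h] .
    show "\<exists>!v. v \<in> hom C (Dom C a) (Dom C u) \<and> u \<cdot> v = a \<and> (p1 \<cdot> s) \<cdot> v = b"
      unfolding dd
    proof (rule ex_ex1I)
      obtain z where zh: "z \<in> hom C Z P" and p1z: "p1 \<cdot> z = b" and p2z: "p2 \<cdot> z = q \<cdot> (w1 \<cdot> a)"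
        using prod_ex[OF prod bh qw1a] by blast
      have rPz: "rho P \<cdot> z \<in> hom C Z (RO P)" using comp_hom[OF zh rP] .
      have ez: "rho P \<cdot> z = kk \<cdot> (w2 \<cdot> a)"
      proof (rule joint_monic[OF RPprod rPz kw2a])
        have "R p1 \<cdot> (rho P \<cdot> z) = rho X \<cdot> (p1 \<cdot> z)" using sq_ext[OF sq1 zh rP Rp1 p1 rX] .
        also have "\<dots> = rho X \<cdot> b" using p1z by simp
        also have "\<dots> = (R p1 \<cdot> (kk \<cdot> w2)) \<cdot> a" using eab by simp
        also have "\<dots> = R p1 \<cdot> ((kk \<cdot> w2) \<cdot> a)" using assoc[OF ah kkw2 Rp1] .
        also have "\<dots> = R p1 \<cdot> (kk \<cdot> (w2 \<cdot> a))" using assoc[OF ah w2h kkh] by simp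
        finally show "R p1 \<cdot> (rho P \<cdot> z) = R p1 \<cdot> (kk \<cdot> (w2 \<cdot> a))" .
        have "R p2 \<cdot> (rho P \<cdot> z) = rho Y \<cdot> (p2 \<cdot> z)" using sq_ext[OF sq2 zh rP Rp2 p2 rY] .
        also have "\<dots> = rho Y \<cdot> (q \<cdot> (w1 \<cdot> a))" using p2z by simp
        also have "\<dots> = n' \<cdot> (q' \<cdot> (w1 \<cdot> a))" using sq_ext[OF eqq w1a qh rY q'h n'h] .
        also have "\<dots> = n' \<cdot> (f' \<cdot> (w2 \<cdot> a))" using eqa by simp
        also have "\<dots> = R p2 \<cdot> (kk \<cdot> (w2 \<cdot> a))" using sq_ext[OF eqf[symmetric] w2a f'h n'h kkh Rp2] .
        finally show "R p2 \<cdot> (rho P \<cdot> z) = R p2 \<cdot> (kk \<cdot> (w2 \<cdot> a))" .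
      qed
      obtain v where vh: "v \<in> hom C Z S" and sv: "s \<cdot> v = z" and s'v: "s' \<cdot> v = w2 \<cdot> a"
        using pb_ex'[OF pbs rP kkh sh zh w2a ez] by blast
      have uvh: "u \<cdot> v \<in> hom C Z W" using comp_hom[OF vh uh] .
      have tvh: "t \<cdot> v \<in> hom C Z Q" using comp_hom[OF vh th] .
      have tv: "t \<cdot> v = w1 \<cdot> a"
      proof (rule pb_uniq'[OF pbq qh tvh w1a])
        have "q \<cdot> (t \<cdot> v) = (q \<cdot> t) \<cdot> v" using assoc[OF vh th qh] by simp
        also have "\<dots> = (p2 \<cdot> s) \<cdot> v" using qt by simp
        also have "\<dots> = p2 \<cdot> (s \<cdot> v)" using assoc[OF vh sh p2] .
        also have "\<dots> = q \<cdot> (w1 \<cdot> a)" using sv p2z by simp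
        finally show "q \<cdot> (t \<cdot> v) = q \<cdot> (w1 \<cdot> a)" .
        have "q' \<cdot> (t \<cdot> v) = (q' \<cdot> t) \<cdot> v" using assoc[OF vh th q'h] by simp
        also have "\<dots> = (f' \<cdot> s') \<cdot> v" using q't by simp
        also have "\<dots> = f' \<cdot> (s' \<cdot> v)" using assoc[OF vh s'h f'h] .
        also have "\<dots> = f' \<cdot> (w2 \<cdot> a)" using s'v by simp
        also have "\<dots> = q' \<cdot> (w1 \<cdot> a)" using eqa by simp
        finally show "q' \<cdot> (t \<cdot> v) = q' \<cdot> (w1 \<cdot> a)" .
      qed
      have uv: "u \<cdot> v = a"
      proof (rule pb_uniq'[OF pbW w1h uvh ah])
        have "w1 \<cdot> (u \<cdot> v) = (w1 \<cdot> u) \<cdot> v" using assoc[OF vh uh w1h] by simp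
        also have "\<dots> = w1 \<cdot> a" using w1u tv by simp
        finally show "w1 \<cdot> (u \<cdot> v) = w1 \<cdot> a" .
        have "w2 \<cdot> (u \<cdot> v) = (w2 \<cdot> u) \<cdot> v" using assoc[OF vh uh w2h] by simp
        also have "\<dots> = w2 \<cdot> a" using w2u s'v by simp
        finally show "w2 \<cdot> (u \<cdot> v) = w2 \<cdot> a" .
      qed
      have "(p1 \<cdot> s) \<cdot> v = p1 \<cdot> (s \<cdot> v)" using assoc[OF vh sh p1] .
      also have "\<dots> = b" using sv p1z by simp
      finally have "(p1 \<cdot> s) \<cdot> v = b" .
      then show "\<exists>v. v \<in> hom C Z S \<and> u \<cdot> v = a \<and> (p1 \<cdot> s) \<cdot> v = b" using vh uv by blast
    next
      have key: "p1 \<cdot> (s \<cdot> v) = b \<and> p2 \<cdot> (s \<cdot> v) = q \<cdot> (w1 \<cdot> a) \<and> s' \<cdot> v = w2 \<cdot> a"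
        if vh: "v \<in> hom C Z S" and uv: "u \<cdot> v = a" and pv: "(p1 \<cdot> s) \<cdot> v = b" for v
      proof (intro conjI)
        show "p1 \<cdot> (s \<cdot> v) = b" using assoc[OF vh sh p1] pv by simp
        have "p2 \<cdot> (s \<cdot> v) = (p2 \<cdot> s) \<cdot> v" using assoc[OF vh sh p2] by simp
        also have "\<dots> = (q \<cdot> t) \<cdot> v" using qt by simp
        also have "\<dots> = q \<cdot> (t \<cdot> v)" using assoc[OF vh th qh] .
        also have "\<dots> = q \<cdot> ((w1 \<cdot> u) \<cdot> v)" using w1u by simp
        also have "\<dots> = q \<cdot> (w1 \<cdot> (u \<cdot> v))" using assoc[OF vh uh w1h] by simp
        also have "\<dots> = q \<cdot> (w1 \<cdot> a)" using uv by simp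
        finally show "p2 \<cdot> (s \<cdot> v) = q \<cdot> (w1 \<cdot> a)" .
        have "s' \<cdot> v = (w2 \<cdot> u) \<cdot> v" using w2u by simp
        also have "\<dots> = w2 \<cdot> (u \<cdot> v)" using assoc[OF vh uh w2h] .
        also have "\<dots> = w2 \<cdot> a" using uv by simp
        finally show "s' \<cdot> v = w2 \<cdot> a" .
      qed
      fix v1 v2
      assume v1: "v1 \<in> hom C Z S \<and> u \<cdot> v1 = a \<and> (p1 \<cdot> s) \<cdot> v1 = b"
        and v2: "v2 \<in> hom C Z S \<and> u \<cdot> v2 = a \<and> (p1 \<cdot> s) \<cdot> v2 = b"
      have k1: "p1 \<cdot> (s \<cdot> v1) = b \<and> p2 \<cdot> (s \<cdot> v1) = q \<cdot> (w1 \<cdot> a) \<and> s' \<cdot> v1 = w2 \<cdot> a"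
        using key v1 by blast
      have k2: "p1 \<cdot> (s \<cdot> v2) = b \<and> p2 \<cdot> (s \<cdot> v2) = q \<cdot> (w1 \<cdot> a) \<and> s' \<cdot> v2 = w2 \<cdot> a"
        using key v2 by blast
      have sv1: "s \<cdot> v1 \<in> hom C Z P" using comp_hom[OF conjunct1[OF v1] sh] .
      have sv2: "s \<cdot> v2 \<in> hom C Z P" using comp_hom[OF conjunct1[OF v2] sh] .
      have "s \<cdot> v1 = s \<cdot> v2" using prod_uniq[OF prod sv1 sv2] k1 k2 by simp
      then show "v1 = v2" using pb_uniq'[OF pbs sh, of v1 Z v2] v1 v2 k1 k2 by simp
    qed
  qed
  have rXE: "rho X \<in> E" by (rule rhoE)
  have uE: "u \<in> E" using Estab rXE pbu unfolding pullback_stable_def by blast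
  have tE: "t \<in> E" using E_comp[OF uE w1E] w1u hom_cod[OF uh] hom_dom[OF w1h] by simp
  obtain ei where iM: "img C E M p2 s \<in> M" and eiE: "ei \<in> E" and ci: "Cod C ei = Dom C (img C E M p2 s)"
    and ieq: "p2 \<cdot> s = img C E M p2 s \<cdot> ei"
    using img_C[OF p2 sh] by blast
  have qM: "q \<in> M" using M_stable[OF pbq] NM n'N by blast
  show ?thesis
    using fact_eq[OF eiE tE iM qM ci _ ] ieq qt hom_cod[OF th] Q_def by simp
qed

end

context setting begin

lemma sub_eq_full: "sub_eq (full_sub C AO) m n \<Longrightarrow> sub_eq C m n"
  unfolding sub_eq_def using sub_le_full[of C AO m n] sub_le_full[of C AO n m] by blast

lemma main: "compact C E M (clift C AO F N RO rho c) X"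
  unfolding compact_def
proof (intro ballI allI impI)
  fix Y P p1 p2 assume Y: "Y \<in> Obj C" and prod: "is_product C P p1 p2 X Y"
  note pt = prod_typ[OF prod]
  have p1: "p1 \<in> hom C P X" and p2: "p2 \<in> hom C P Y" using pt by auto
  have dp2: "Dom C p2 = P" "Cod C p2 = Y" using hom_dom[OF p2] hom_cod[OF p2] by auto
  have RPprod: "is_product (full_sub C AO) (RO P) (R p1) (R p2) (RO X) (RO Y)"
    using Rprod Y prod by blast
  have RP: "RO P \<in> AO" using rho_hom[OF pt(3)] by simp
  have RY: "RO Y \<in> AO" using rho_hom[OF pt(5)] by simp
  have rP: "rho P \<in> hom C P (RO P)" using rho_hom[OF pt(3)] by simp
  have rY: "rho Y \<in> hom C Y (RO Y)" using rho_hom[OF pt(5)] by simp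
  have Rp2: "R p2 \<in> hom C (RO P) (RO Y)" using Rarr_spec[OF p2] by simp
  show "preserving C E M (clift C AO F N RO rho c) p2"
    unfolding preserving_def dp2
  proof
    fix m assume "m \<in> sub C M P"
    then have mM: "m \<in> M" and mC: "Cod C m = P" unfolding sub_def by auto
    define Dm where "Dm = Dom C m"
    have mh: "m \<in> hom C Dm P" using homI[OF M_arr[OF mM] Dm_def[symmetric] mC] .
    have DmO: "Dm \<in> Obj C" using hom_obj1[OF mh] .
    have RDm: "RO Dm \<in> AO" using rho_hom[OF DmO] by simp
    have Rm: "R m \<in> hom C (RO Dm) (RO P)" using Rarr_spec[OF mh] by simp
    have idh: "Idt C (RO Dm) \<in> hom C (RO Dm) (RO Dm)" using id_hom RDm AOsub by blast
    define n where "n = img C F N (R m) (Idt C (RO Dm))"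
    obtain e0 where nN: "n \<in> N" and e0F: "e0 \<in> F" and ce0: "Cod C e0 = Dom C n"
      and ne0': "R m \<cdot> Idt C (RO Dm) = n \<cdot> e0"
      using imgA[OF Rm idh RDm RP] unfolding n_def[symmetric] by blast
    have ne0: "n \<cdot> e0 = R m" using ne0' id_r[OF Rm] by simp
    have e0h: "e0 \<in> hom C (RO Dm) (Dom C n)" and nh: "n \<in> hom C (Dom C n) (RO P)"
      using comp_typ[OF ne0 Rm conjunct1[OF N_arr[OF nN]] conjunct1[OF F_arr[OF e0F]] ce0] by auto
    have nsub: "n \<in> sub C N (RO P)" using nN hom_cod[OF nh] unfolding sub_def by simp
    define kk where "kk = c (RO P) n"
    have kksub: "kk \<in> sub C N (RO P)" using clop_sub[OF RP nsub] kk_def by simp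
    have kkN: "kk \<in> N" and kkC: "Cod C kk = RO P" using kksub unfolding sub_def by auto
    have kkh: "kk \<in> hom C (Dom C kk) (RO P)" using homI[OF conjunct1[OF N_arr[OF kkN]] HOL.refl kkC] .
    have DkkA: "Dom C kk \<in> AO" using N_arr[OF kkN] by simp
    obtain s' where pbs: "is_pullback C (rho P) kk (preim C (rho P) kk) s'"
      using preim_pb[OF hom_arr[OF rP] hom_arr[OF kkh]] hom_cod[OF rP] kkC by auto
    define m2 where "m2 = img C E M p2 m"
    obtain e2 where m2M: "m2 \<in> M" and e2E: "e2 \<in> E" and ce2: "Cod C e2 = Dom C m2" and pm: "p2 \<cdot> m = m2 \<cdot> e2"
      using img_C[OF p2 mh] unfolding m2_def[symmetric] by blast
    define Dm2 where "Dm2 = Dom C m2"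
    have e2h: "e2 \<in> hom C Dm (Dom C m2)" and m2h: "m2 \<in> hom C (Dom C m2) Y"
      using comp_typ[OF pm[symmetric] comp_hom[OF mh p2] M_arr[OF m2M] E_arr[OF e2E] ce2] by auto
    have Dm2O: "Dm2 \<in> Obj C" using hom_obj1[OF m2h] Dm2_def by simp
    have RDm2: "RO Dm2 \<in> AO" using rho_hom[OF Dm2O] by simp
    have Rm2: "R m2 \<in> hom C (RO Dm2) (RO Y)" using Rarr_spec[OF m2h] Dm2_def by simp
    have Re2: "R e2 \<in> hom C (RO Dm) (RO Dm2)" using Rarr_spec[OF e2h] Dm2_def by simp
    have Re2F: "R e2 \<in> F" using RE e2E by blast
    have idh2: "Idt C (RO Dm2) \<in> hom C (RO Dm2) (RO Dm2)" using id_hom RDm2 AOsub by blast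
    define b where "b = img C F N (R m2) (Idt C (RO Dm2))"
    obtain fb where bN: "b \<in> N" and fbF: "fb \<in> F" and cfb: "Cod C fb = Dom C b"
      and bfb': "R m2 \<cdot> Idt C (RO Dm2) = b \<cdot> fb"
      using imgA[OF Rm2 idh2 RDm2 RY] unfolding b_def[symmetric] by blast
    have bfb: "b \<cdot> fb = R m2" using bfb' id_r[OF Rm2] by simp
    have fbh: "fb \<in> hom C (RO Dm2) (Dom C b)" and bh: "b \<in> hom C (Dom C b) (RO Y)"
      using comp_typ[OF bfb Rm2 conjunct1[OF N_arr[OF bN]] conjunct1[OF F_arr[OF fbF]] cfb] by auto
    have DnA: "Dom C n \<in> AO" using N_arr[OF nN] by simp
    define a where "a = img C F N (R p2) n"
    obtain fa where aN: "a \<in> N" and faF: "fa \<in> F" and cfa: "Cod C fa = Dom C a"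
      and afa: "R p2 \<cdot> n = a \<cdot> fa"
      using imgA[OF Rp2 nh DnA RY] unfolding a_def[symmetric] by blast
    have fah: "fa \<in> hom C (Dom C n) (Dom C a)" and ah: "a \<in> hom C (Dom C a) (RO Y)"
      using comp_typ[OF afa[symmetric] comp_hom[OF nh Rp2] conjunct1[OF N_arr[OF aN]] conjunct1[OF F_arr[OF faF]] cfa]
      by auto
    have eqab: "a \<cdot> (fa \<cdot> e0) = b \<cdot> (fb \<cdot> R e2)"
    proof -
      have "a \<cdot> (fa \<cdot> e0) = (a \<cdot> fa) \<cdot> e0" using assoc[OF e0h fah ah] by simp
      also have "\<dots> = (R p2 \<cdot> n) \<cdot> e0" using afa by simp
      also have "\<dots> = R p2 \<cdot> (n \<cdot> e0)" using assoc[OF e0h nh Rp2] .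
      also have "\<dots> = R p2 \<cdot> R m" using ne0 by simp
      also have "\<dots> = R (p2 \<cdot> m)" using Rarr_comp[OF mh p2] by simp
      also have "\<dots> = R (m2 \<cdot> e2)" using pm by simp
      also have "\<dots> = R m2 \<cdot> R e2" using Rarr_comp[OF e2h m2h] by (simp add: Dm2_def)
      also have "\<dots> = (b \<cdot> fb) \<cdot> R e2" using bfb by simp
      also have "\<dots> = b \<cdot> (fb \<cdot> R e2)" using assoc[OF Re2 fbh bh] by (simp add: Dm2_def)
      finally show ?thesis .
    qed
    have e0E: "e0 \<in> E" using FE e0F by blast
    have faE: "fa \<in> E" using FE faF by blast
    have fbE: "fb \<in> E" using FE fbF by blast
    have Re2E: "R e2 \<in> E" using FE Re2F by blast
    have E1: "fa \<cdot> e0 \<in> E" using E_comp[OF e0E faE] hom_cod[OF e0h] hom_dom[OF fah] by simp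
    have E2: "fb \<cdot> R e2 \<in> E" using E_comp[OF Re2E fbE] hom_cod[OF Re2] hom_dom[OF fbh] by simp
    have aM: "a \<in> M" and bM: "b \<in> M" using aN bN NM by auto
    have c1: "Cod C (fa \<cdot> e0) = Dom C a" using hom_cod[OF comp_hom[OF e0h fah]] .
    have c2: "Cod C (fb \<cdot> R e2) = Dom C b" using hom_cod[OF comp_hom[OF Re2 fbh]] by (simp add: Dm2_def)
    have abC: "sub_eq C a b" using fact_eq[OF E1 E2 aM bM c1 c2 eqab] .
    have DaA: "Dom C a \<in> AO" and DbA: "Dom C b \<in> AO" using N_arr[OF aN] N_arr[OF bN] by auto
    have abA: "sub_le (full_sub C AO) a b" "sub_le (full_sub C AO) b a"
      using abC sub_le_full2[OF DaA DbA] sub_le_full2[OF DbA DaA] unfolding sub_eq_def by auto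
    have asub: "a \<in> sub C N (RO Y)" using aN hom_cod[OF ah] unfolding sub_def by simp
    have bsub: "b \<in> sub C N (RO Y)" using bN hom_cod[OF bh] unfolding sub_def by simp
    have cab: "sub_eq (full_sub C AO) (c (RO Y) a) (c (RO Y) b)"
      unfolding sub_eq_def using clop_mono[OF RY asub bsub abA(1)] clop_mono[OF RY bsub asub abA(2)] by simp
    have presH: "\<forall>Y\<in>Obj (full_sub C AO). \<forall>P p1 p2. is_product (full_sub C AO) P p1 p2 (RO X) Y \<longrightarrow>
        preserving (full_sub C AO) F N c p2"
      using cmpt unfolding compact_def .
    have RY': "RO Y \<in> Obj (full_sub C AO)" using RY by simp
    have pres: "preserving (full_sub C AO) F N c (R p2)"
      using presH[rule_format, OF RY' RPprod] .
    have dRp2: "Dom C (R p2) = RO P" "Cod C (R p2) = RO Y" using hom_dom[OF Rp2] hom_cod[OF Rp2] by auto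
    have cmpH: "\<forall>m\<in>sub (full_sub C AO) N (Dom (full_sub C AO) (R p2)).
        sub_eq (full_sub C AO) (img (full_sub C AO) F N (R p2) (c (Dom (full_sub C AO) (R p2)) m))
          (c (Cod (full_sub C AO) (R p2)) (img (full_sub C AO) F N (R p2) m))"
      using pres unfolding preserving_def .
    have nsub': "n \<in> sub (full_sub C AO) N (Dom (full_sub C AO) (R p2))" using nsub dRp2 by simp
    have cmp1: "sub_eq (full_sub C AO) (img C F N (R p2) kk) (c (RO Y) a)"
      using cmpH[rule_format, OF nsub'] unfolding full_sub_simps img_full dRp2 kk_def a_def .
    define n' where "n' = img C F N (R p2) kk"
    obtain f' where n'N: "n' \<in> N" and f'F: "f' \<in> F" and cf': "Cod C f' = Dom C n'"
      and eqf: "R p2 \<cdot> kk = n' \<cdot> f'"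
      using imgA[OF Rp2 kkh DkkA RY] unfolding n'_def[symmetric] by blast
    have n'h: "n' \<in> hom C (Dom C n') (RO Y)"
      using comp_typ[OF eqf[symmetric] comp_hom[OF kkh Rp2] conjunct1[OF N_arr[OF n'N]] conjunct1[OF F_arr[OF f'F]] cf']
      by auto
    define g where "g = c (RO Y) b"
    have gsub: "g \<in> sub C N (RO Y)" using clop_sub[OF RY bsub] g_def by simp
    have casub: "c (RO Y) a \<in> sub C N (RO Y)" using clop_sub[OF RY asub] .
    have gN: "g \<in> N" and gC: "Cod C g = RO Y" using gsub unfolding sub_def by auto
    have n'g: "sub_eq C n' g"
    proof (rule sub_eq_trans)
      show "n' \<in> Arr C" using N_arr[OF n'N] by simp
      show "c (RO Y) a \<in> Arr C" using casub N_arr unfolding sub_def by auto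
      show "g \<in> Arr C" using N_arr[OF gN] by simp
      show "sub_eq C n' (c (RO Y) a)" using sub_eq_full[OF cmp1] n'_def by simp
      show "sub_eq C (c (RO Y) a) g" using sub_eq_full[OF cab] g_def by simp
    qed
    obtain q' where pbq: "is_pullback C (rho Y) n' (preim C (rho Y) n') q'"
      using preim_pb[OF hom_arr[OF rY] hom_arr[OF n'h]] hom_cod[OF rY] hom_cod[OF n'h] by auto
    obtain r' where pbr: "is_pullback C (rho Y) g (preim C (rho Y) g) r'"
      using preim_pb[OF hom_arr[OF rY] conjunct1[OF N_arr[OF gN]]] hom_cod[OF rY] gC by auto
    have qr: "sub_eq C (preim C (rho Y) n') (preim C (rho Y) g)" using pb_mono_eq[OF pbq pbr n'g] .
    have bcq: "sub_eq C (img C E M p2 (preim C (rho P) kk)) (preim C (rho Y) n')"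
      using bc[OF prod RPprod kkN kkC pbs n'N f'F cf' eqf pbq] .
    have L: "clift C AO F N RO rho c P m = preim C (rho P) kk"
      unfolding clift_def gimg_full kk_def n_def using hom_dom[OF Rm] by simp
    have Rr: "clift C AO F N RO rho c Y m2 = preim C (rho Y) g"
      unfolding clift_def gimg_full g_def b_def Dm2_def using hom_dom[OF Rm2] Dm2_def by simp
    have A1: "img C E M p2 (preim C (rho P) kk) \<in> Arr C"
    proof -
      have sP: "preim C (rho P) kk \<in> hom C (Dom C (preim C (rho P) kk)) P"
        using pb_typ(1)[OF pbs] hom_dom[OF rP] by simp
      show ?thesis using M_arr conjunct1[OF img_C[OF p2 sP]] by simp
    qed
    have A2: "preim C (rho Y) n' \<in> Arr C" using hom_arr[OF pb_typ(1)[OF pbq]] .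
    have A3: "preim C (rho Y) g \<in> Arr C" using hom_arr[OF pb_typ(1)[OF pbr]] .
    have "sub_eq C (img C E M p2 (preim C (rho P) kk)) (preim C (rho Y) g)"
      using sub_eq_trans[OF A1 A2 A3 bcq qr] .
    then show "sub_eq C (img C E M p2 (clift C AO F N RO rho c P m))
                        (clift C AO F N RO rho c Y (img C E M p2 m))"
      using L Rr m2_def by simp
  qed
qed

end
theorem theorem2p7:
  fixes C :: "('o, 'a) cat" and AO :: "'o set"
    and E M F N :: "'a set"
    and RO :: "'o \<Rightarrow> 'o" and rho :: "'o \<Rightarrow> 'a"
    and c :: "'o \<Rightarrow> 'a \<Rightarrow> 'a" and X :: 'o
  assumes catX: "is_cat C" and fcX: "finitely_complete C"
    and fsX: "proper_factsys C E M"
    and AOsub: "AO \<subseteq> Obj C"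
    and fcA: "finitely_complete (full_sub C AO)"
    and fsA: "proper_factsys (full_sub C AO) F N"
    and refl: "is_reflection C AO RO rho"
    and NM: "N \<subseteq> M"
    and RE: "\<forall>e\<in>E. Rarr C RO rho e \<in> F"
    and Estab: "pullback_stable C E"
    and FE: "F \<subseteq> E"
    and clop: "closure_op (full_sub C AO) F N c"
    and XObj: "X \<in> Obj C"
    and Rprod: "\<forall>Y\<in>Obj C. \<forall>P p1 p2. is_product C P p1 p2 X Y \<longrightarrow>
                  is_product (full_sub C AO) (RO P) (Rarr C RO rho p1) (Rarr C RO rho p2) (RO X) (RO Y)"
    and rhoE: "rho X \<in> E"
    and cmpt: "compact (full_sub C AO) F N c (RO X)"
  shows "compact C E M (clift C AO F N RO rho c) X"
proof -
  interpret S: setting C E M AO F N RO rho c X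
    by unfold_locales (fact catX fcX fsX AOsub fsA refl NM RE Estab FE clop XObj Rprod rhoE cmpt)+
  show ?thesis by (rule S.main)
qed

end
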